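(* Let $s,t,n$ be positive integers. Let $S_1$ be the set of lattice paths from $(0,0)$ to $(sn+1,tn)$ that avoid $A_{s,t}$, and $S_2$ the set of lattice paths from $(1,0)$ to $(sn,tn-1)$ that avoid $A_{s,t}$. Then \[ |S_1| = t\binom{sn+tn}{tn} - s\binom{sn+tn}{tn-1} \quad\text{and}\quad |S_2| = t\binom{sn+tn-2}{tn-1} - s\binom{sn+tn-2}{tn-2}. \]
   Context: A lattice path is a finite sequence of unit steps, each north $(0,1)$ or east $(1,0)$. For positive integers $s,t$, $A_{s,t}$ is the infinite staircase path that starts at $(0,t)$ and then takes $s$ steps east, $t$ steps north, $s$ steps east, $t$ steps north, and so on forever. A lattice path "avoids" $A_{s,t}$ if it does not touch or cross it, i.e. shares no lattice point with $A_{s,t}$. *)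

theory Defs
  imports Main
begin

text \<open>A lattice path is given by its starting point and its list of unit steps;
  a step True is an east step (1,0), a step False is a north step (0,1).\<close>

fun path_points :: "int \<times> int \<Rightarrow> bool list \<Rightarrow> (int \<times> int) list" where
  "path_points p [] = [p]"
| "path_points (x, y) (b # bs) =
     (x, y) # path_points (if b then (x + 1, y) else (x, y + 1)) bs"

text \<open>Lattice points of the infinite staircase path A_{s,t}: starting at (0,t),
  s east steps, t north steps, s east steps, ...\<close>

definition staircase_points :: "nat \<Rightarrow> nat \<Rightarrow> (int \<times> int) set" where
  "staircase_points s t =
     {(x, y). \<exists>k::nat.
        (y = int ((k + 1) * t) \<and> int (k * s) \<le> x \<and> x \<le> int ((k + 1) * s))
      \<or> (x = int ((k + 1) * s) \<and> int ((k + 1) * t) \<le> y \<and> y \<le> int ((k + 2) * t))}"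

definition lattice_paths :: "int \<times> int \<Rightarrow> int \<times> int \<Rightarrow> bool list set" where
  "lattice_paths p q = {bs. last (path_points p bs) = q}"

definition avoids :: "int \<times> int \<Rightarrow> bool list \<Rightarrow> nat \<Rightarrow> nat \<Rightarrow> bool" where
  "avoids p bs s t \<longleftrightarrow> set (path_points p bs) \<inter> staircase_points s t = {}"

definition zbinom :: "nat \<Rightarrow> int \<Rightarrow> int" where
  "zbinom m k = (if k < 0 then 0 else int (m choose nat k))"

end

theory Submission
  imports Defs
begin


lemma cycA:
  fixes w :: "nat \<Rightarrow> int"
  assumes n: "0 < n" and per: "\<And>q. w (q + n) = w q + 1"
  shows "card {q. q < n \<and> (\<forall>m\<in>{1..n}. w (q + m) > w q)} = 1"
proof -
  let ?A = "{q. q < n \<and> (\<forall>m\<in>{1..n}. w (q + m) > w q)}"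
  define mu where "mu = Min (w ` {..<n})"
  have fin: "finite (w ` {..<n})" by simp
  have ne: "w ` {..<n} \<noteq> {}" using n by auto
  have mu_le: "\<And>q. q < n \<Longrightarrow> mu \<le> w q" unfolding mu_def using fin by auto
  have "mu \<in> w ` {..<n}" unfolding mu_def using fin ne by (rule Min_in)
  then obtain q0 where q0: "q0 < n" "w q0 = mu" by auto
  define q where "q = Max {q. q < n \<and> w q = mu}"
  have fin2: "finite {q. q < n \<and> w q = mu}" by simp
  have qin: "q \<in> {q. q < n \<and> w q = mu}" unfolding q_def
    using fin2 q0 by (intro Max_in) auto
  have qmax: "\<And>p. p < n \<Longrightarrow> w p = mu \<Longrightarrow> p \<le> q" unfolding q_def using fin2 by auto
  have "q \<in> ?A"
  proof -
    have "w (q + m) > w q" if m: "m \<in> {1..n}" for m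
    proof (cases "q + m < n")
      case True
      have "w (q+m) \<ge> mu" using mu_le True by auto
      moreover have "w (q+m) \<noteq> mu" using qmax[of "q+m"] True m by auto
      ultimately show ?thesis using qin by auto
    next
      case False
      define p where "p = q + m - n"
      have p: "p < n" "q + m = p + n" using False m qin by (auto simp: p_def)
      have "w (q+m) = w p + 1" using per p by simp
      thus ?thesis using mu_le[OF p(1)] qin by auto
    qed
    thus ?thesis using qin by auto
  qed
  moreover have "p = q" if "p \<in> ?A" for p
  proof (rule ccontr)
    assume ne: "p \<noteq> q"
    have uniq: False if a: "a \<in> ?A" and b: "b \<in> ?A" and ab: "a < b" for a b
    proof -
      have "w b > w a" using a b ab by (auto dest!: bspec[of _ _ "b - a"])
      moreover have "w (b + (a + n - b)) > w b" using a b ab by (intro bspec[OF conjunct2[OF b[simplified]]]) auto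
      moreover have "b + (a + n - b) = a + n" using a b ab by auto
      ultimately show False using per[of a] by simp
    qed
    show False using uniq[OF that \<open>q \<in> ?A\<close>] uniq[OF \<open>q \<in> ?A\<close> that] ne by linarith
  qed
  ultimately have "?A = {q}" by blast
  thus ?thesis by simp
qed


lemma cycB:
  fixes w :: "nat \<Rightarrow> int"
  assumes n: "0 < n" and per: "\<And>q. w (q + n) = w q - 1"
  shows "card {q. q < n \<and> (\<forall>m\<in>{1..<n}. w (q + m) \<ge> w q)} = 1"
proof -
  let ?A = "{q. q < n \<and> (\<forall>m\<in>{1..<n}. w (q + m) \<ge> w q)}"
  define mu where "mu = Min (w ` {..<n})"
  have fin: "finite (w ` {..<n})" by simp
  have ne: "w ` {..<n} \<noteq> {}" using n by auto
  have mu_le: "\<And>q. q < n \<Longrightarrow> mu \<le> w q" unfolding mu_def using fin by auto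
  have "mu \<in> w ` {..<n}" unfolding mu_def using fin ne by (rule Min_in)
  then obtain q0 where q0: "q0 < n" "w q0 = mu" by auto
  define q where "q = Min {q. q < n \<and> w q = mu}"
  have fin2: "finite {q. q < n \<and> w q = mu}" by simp
  have qin: "q \<in> {q. q < n \<and> w q = mu}" unfolding q_def
    using fin2 q0 by (intro Min_in) auto
  have qmin: "\<And>p. p < n \<Longrightarrow> w p = mu \<Longrightarrow> q \<le> p" unfolding q_def using fin2 by auto
  have "q \<in> ?A"
  proof -
    have "w (q + m) \<ge> w q" if m: "m \<in> {1..<n}" for m
    proof (cases "q + m < n")
      case True
      have "w (q+m) \<ge> mu" using mu_le True by auto
      thus ?thesis using qin by auto
    next
      case False
      define p where "p = q + m - n"
      have p: "p < q" "q + m = p + n" using False m qin by (auto simp: p_def)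
      have "w (q+m) = w p - 1" using per p by simp
      moreover have "w p \<noteq> mu" using qmin[of p] p qin by auto
      moreover have "w p \<ge> mu" using mu_le[of p] p qin by auto
      ultimately show ?thesis using qin by auto
    qed
    thus ?thesis using qin by auto
  qed
  moreover have "p = q" if "p \<in> ?A" for p
  proof (rule ccontr)
    assume ne: "p \<noteq> q"
    have uniq: False if a: "a \<in> ?A" and b: "b \<in> ?A" and ab: "a < b" for a b
    proof -
      have "w b \<ge> w a" using a b ab by (auto dest!: bspec[of _ _ "b - a"])
      moreover have "w (b + (a + n - b)) \<ge> w b" using a b ab by (intro bspec[OF conjunct2[OF b[simplified]]]) auto
      moreover have "b + (a + n - b) = a + n" using a b ab by auto
      ultimately show False using per[of a] by simp
    qed
    show False using uniq[OF that \<open>q \<in> ?A\<close>] uniq[OF \<open>q \<in> ?A\<close> that] ne by linarith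
  qed
  ultimately have "?A = {q}" by blast
  thus ?thesis by simp
qed



definition Sp :: "nat list \<Rightarrow> nat \<Rightarrow> nat" where
  "Sp a i = (\<Sum>l<i. a ! (l mod length a))"

lemma Sp_Suc: "Sp a (Suc i) = Sp a i + a ! (i mod length a)"
  unfolding Sp_def by simp

lemma Sp_add: "Sp a (i + k) = Sp a i + (\<Sum>l<k. a ! ((i + l) mod length a))"
  unfolding Sp_def by (induction k) (auto simp: add.commute)

lemma sum_list_nth: "sum_list a = (\<Sum>l<length a. a ! l)"
  by (simp add: sum_list_sum_nth atLeast0LessThan)

lemma Sp_per: "Sp a (i + length a) = Sp a i + sum_list a"
proof (induction i)
  case 0
  have "Sp a (length a) = (\<Sum>l<length a. a ! l)" unfolding Sp_def by (rule sum.cong) auto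
  thus ?case by (simp add: sum_list_nth Sp_def)
next
  case (Suc i)
  have "Sp a (Suc i + length a) = Sp a (Suc (i + length a))" by simp
  also have "\<dots> = Sp a (i + length a) + a ! ((i + length a) mod length a)" by (rule Sp_Suc)
  also have "\<dots> = Sp a (Suc i) + sum_list a" using Suc by (simp add: Sp_Suc)
  finally show ?case .
qed

lemma Sp_mono: "i \<le> j \<Longrightarrow> Sp a i \<le> Sp a j"
  using Sp_add[of a i "j - i"] by simp

lemma Sp_rot: assumes "j < length a" "k \<le> length a"
  shows "Sp a (j + k) = Sp a j + sum_list (take k (rotate j a))"
proof -
  have "sum_list (take k (rotate j a)) = (\<Sum>l<k. rotate j a ! l)"
    using assms by (simp add: sum_list_nth min_def)
  also have "\<dots> = (\<Sum>l<k. a ! ((j + l) mod length a))"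
    using assms by (intro sum.cong) (auto simp: nth_rotate add.commute)
  finally show ?thesis by (simp add: Sp_add)
qed



lemma card_split:
  assumes t: "0 < (t::nat)"
  shows "card {j. j < t*n \<and> P j} = (\<Sum>c<t. card {q. q<n \<and> P (c + t*q)})"
proof -
  let ?f = "\<lambda>(c,q). c + t*q"
  let ?S = "SIGMA c:{..<t}. {q. q<n \<and> P (c + t*q)}"
  have "{j. j < t*n \<and> P j} = ?f ` ?S"
  proof (intro equalityI subsetI)
    fix j assume j: "j \<in> {j. j < t*n \<and> P j}"
    have "j = j mod t + t * (j div t)" by simp
    moreover have "j div t < n" using j t by (simp add: less_mult_imp_div_less mult.commute)
    moreover have "j mod t < t" using t by simp
    ultimately show "j \<in> ?f ` ?S" using j by (intro image_eqI[of _ _ "(j mod t, j div t)"]) auto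
  next
    fix j assume "j \<in> ?f ` ?S"
    then obtain c q where cq: "c < t" "q < n" "P (c + t*q)" "j = c + t*q" by auto
    have "c + t*q < t + t*q" using cq by simp
    also have "\<dots> = t * (Suc q)" by simp
    also have "\<dots> \<le> t * n" using cq by (intro mult_le_mono2) auto
    finally show "j \<in> {j. j < t*n \<and> P j}" using cq by auto
  qed
  moreover have "inj_on ?f ?S"
  proof (rule inj_onI)
    fix x y assume "x \<in> ?S" "y \<in> ?S" "?f x = ?f y"
    then obtain c q c' q' where "x = (c,q)" "y = (c',q')" "c < t" "c' < t" "c + t*q = c' + t*q'" by auto
    moreover have "c = c'" using calculation by (metis mod_mult_self2 mod_less)
    moreover have "q = q'" using calculation t by simp
    ultimately show "x = y" by simp
  qed
  ultimately have "card {j. j < t*n \<and> P j} = card ?S" by (simp add: card_image)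
  also have "\<dots> = (\<Sum>c<t. card {q. q<n \<and> P (c + t*q)})" by (simp add: card_SigmaI)
  finally show ?thesis .
qed

definition good1 :: "nat \<Rightarrow> nat \<Rightarrow> nat \<Rightarrow> nat list \<Rightarrow> bool" where
  "good1 s t n a \<longleftrightarrow> (\<forall>m\<in>{1..n}. s*m < sum_list (take (m*t) a))"

definition good2 :: "nat \<Rightarrow> nat \<Rightarrow> nat \<Rightarrow> nat list \<Rightarrow> bool" where
  "good2 s t n a \<longleftrightarrow> (\<forall>m\<in>{1..<n}. s*m \<le> sum_list (take (m*t) a))"

lemma cyc_good1:
  assumes t: "0 < t" and n: "0 < n" and len: "length a = t*n" and sum: "sum_list a = s*n+1"
  shows "card {j. j < t*n \<and> good1 s t n (rotate j a)} = t"
proof -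
  have "card {q. q<n \<and> good1 s t n (rotate (c + t*q) a)} = 1" if c: "c < t" for c
  proof -
    define w where "w q = int (Sp a (c + t*q)) - int s * int q" for q
    have per: "w (q + n) = w q + 1" for q
    proof -
      have "Sp a (c + t*(q+n)) = Sp a (c + t*q + length a)" using len by (simp add: algebra_simps)
      thus ?thesis unfolding w_def using Sp_per[of a "c+t*q"] sum by (simp add: algebra_simps)
    qed
    have "{q. q<n \<and> good1 s t n (rotate (c + t*q) a)} = {q. q < n \<and> (\<forall>m\<in>{1..n}. w (q + m) > w q)}"
    proof (intro Collect_cong conj_cong refl)
      fix q assume q: "q < n"
      have jl: "c + t*q < length a"
      proof -
        have "c + t*q < t + t*q" using c by simp
        also have "\<dots> = t * (Suc q)" by simp
        also have "\<dots> \<le> t * n" using q by (intro mult_le_mono2) auto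
        finally show ?thesis using len by simp
      qed
      have "(s*m < sum_list (take (m*t) (rotate (c + t*q) a))) \<longleftrightarrow> w (q + m) > w q" if m: "m \<in> {1..n}" for m
      proof -
        have "m*t \<le> length a" using m len by (simp add: mult.commute)
        from Sp_rot[OF jl this]
        have "Sp a (c + t*(q+m)) = Sp a (c + t*q) + sum_list (take (m*t) (rotate (c + t*q) a))"
          by (simp add: algebra_simps)
        thus ?thesis unfolding w_def by (simp add: algebra_simps) (metis of_nat_less_iff of_nat_mult)
      qed
      thus "good1 s t n (rotate (c + t*q) a) = (\<forall>m\<in>{1..n}. w q < w (q + m))"
        unfolding good1_def by auto
    qed
    thus ?thesis using cycA[OF n, of w] per by simp
  qed
  thus ?thesis using card_split[OF t, of n "\<lambda>j. good1 s t n (rotate j a)"] by simp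
qed

lemma cyc_good2:
  assumes t: "0 < t" and n: "0 < n" and s: "0 < s" and len: "length a = t*n" and sum: "sum_list a = s*n - 1"
  shows "card {j. j < t*n \<and> good2 s t n (rotate j a)} = t"
proof -
  have "card {q. q<n \<and> good2 s t n (rotate (c + t*q) a)} = 1" if c: "c < t" for c
  proof -
    define w where "w q = int (Sp a (c + t*q)) - int s * int q" for q
    have sn: "s * n \<ge> 1" using s n by simp
    have per: "w (q + n) = w q - 1" for q
    proof -
      have "Sp a (c + t*(q+n)) = Sp a (c + t*q + length a)" using len by (simp add: algebra_simps)
      moreover have "int (sum_list a) = int s * int n - 1" using sum sn by (simp add: of_nat_diff)
      ultimately show ?thesis unfolding w_def using Sp_per[of a "c+t*q"] by (simp add: algebra_simps)
    qed
    have "{q. q<n \<and> good2 s t n (rotate (c + t*q) a)} = {q. q < n \<and> (\<forall>m\<in>{1..<n}. w (q + m) \<ge> w q)}"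
    proof (intro Collect_cong conj_cong refl)
      fix q assume q: "q < n"
      have jl: "c + t*q < length a"
      proof -
        have "c + t*q < t + t*q" using c by simp
        also have "\<dots> = t * (Suc q)" by simp
        also have "\<dots> \<le> t * n" using q by (intro mult_le_mono2) auto
        finally show ?thesis using len by simp
      qed
      have "(s*m \<le> sum_list (take (m*t) (rotate (c + t*q) a))) \<longleftrightarrow> w (q + m) \<ge> w q" if m: "m \<in> {1..<n}" for m
      proof -
        have "m*t \<le> length a" using m len by (simp add: mult.commute)
        from Sp_rot[OF jl this]
        have "Sp a (c + t*(q+m)) = Sp a (c + t*q) + sum_list (take (m*t) (rotate (c + t*q) a))"
          by (simp add: algebra_simps)
        thus ?thesis unfolding w_def by (simp add: algebra_simps) (metis of_nat_le_iff of_nat_mult)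
      qed
      thus "good2 s t n (rotate (c + t*q) a) = (\<forall>m\<in>{1..<n}. w q \<le> w (q + m))"
        unfolding good2_def by auto
    qed
    thus ?thesis using cycB[OF n, of w] per by simp
  qed
  thus ?thesis using card_split[OF t, of n "\<lambda>j. good2 s t n (rotate j a)"] by simp
qed



lemma sum_list_rotate: "sum_list (rotate j (a::nat list)) = sum_list a"
proof -
  have "sum_list (rotate j a) = sum_list (drop (j mod length a) a) + sum_list (take (j mod length a) a)"
    by (simp add: rotate_drop_take)
  also have "\<dots> = sum_list a" by (metis add.commute append_take_drop_id sum_list_append)
  finally show ?thesis .
qed

lemma rotate_back: "length a = K \<Longrightarrow> 0 < K \<Longrightarrow> rotate (K - j mod K) (rotate j a) = a"
proof -
  assume a: "length a = K" "0 < K"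
  have jm: "j mod K < K" using a by simp
  have e: "j - j mod K = K * (j div K)" by (simp add: minus_mod_eq_mult_div)
  have "j mod K \<le> j" by simp
  hence "(K - j mod K + j) = K + (j - j mod K)" using jm by linarith
  hence "(K - j mod K + j) = K * (Suc (j div K))" using e by simp
  hence "(K - j mod K + j) mod length a = 0" using a by simp
  thus ?thesis by (simp add: rotate_rotate)
qed

lemma double_count:
  fixes G :: "nat list \<Rightarrow> bool" and K M t :: nat
  defines "V \<equiv> {a::nat list. length a = K \<and> sum_list a = M}"
  assumes K: "0 < K" and cyc: "\<And>a. a \<in> V \<Longrightarrow> card {j. j < K \<and> G (rotate j a)} = t"
  shows "K * card {a\<in>V. G a} = t * card V"
proof -
  have finV: "finite V"
  proof (rule finite_subset)
    show "V \<subseteq> {a. set a \<subseteq> {..M} \<and> length a = K}"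
      unfolding V_def by (auto simp: member_le_sum_list)
    show "finite {a. set a \<subseteq> {..M} \<and> length a = K}" by (rule finite_lists_length_eq) simp
  qed
  have rotV: "rotate j a \<in> V" if "a \<in> V" for a j using that unfolding V_def by (simp add: sum_list_rotate)
  have eq: "card {a\<in>V. G (rotate j a)} = card {a\<in>V. G a}" for j
  proof -
    have "inj_on (rotate j) {a\<in>V. G (rotate j a)}"
      by (rule inj_on_inverseI[of _ "rotate (K - j mod K)"]) (auto simp: V_def rotate_back K)
    moreover have "rotate j ` {a\<in>V. G (rotate j a)} = {a\<in>V. G a}"
    proof (intro equalityI subsetI)
      fix b assume "b \<in> {a\<in>V. G a}"
      hence b: "b \<in> V" "G b" by auto
      define a where "a = rotate (K - j mod K) b"
      have "rotate j a = b"
      proof -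
        have "rotate j a = rotate (j + (K - j mod K)) b" by (simp add: a_def rotate_rotate)
        also have "\<dots> = rotate (K - j mod K) (rotate j b)" by (simp add: rotate_rotate add.commute)
        also have "\<dots> = b" using b K by (intro rotate_back) (auto simp: V_def)
        finally show ?thesis .
      qed
      moreover have "a \<in> V" using rotV b unfolding a_def by auto
      ultimately show "b \<in> rotate j ` {a\<in>V. G (rotate j a)}" using b by auto
    qed (auto intro: rotV)
    ultimately show ?thesis by (metis card_image)
  qed
  have "K * card {a\<in>V. G a} = (\<Sum>j<K. card {a\<in>V. G (rotate j a)})" by (simp add: eq)
  also have "\<dots> = (\<Sum>j<K. \<Sum>a\<in>V. if G (rotate j a) then 1 else 0)"
    using finV by (simp add: sum.inter_filter[symmetric] Collect_conj_eq)
  also have "\<dots> = (\<Sum>a\<in>V. \<Sum>j<K. if G (rotate j a) then 1 else 0)" by (rule sum.swap)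
  also have "\<dots> = (\<Sum>a\<in>V. card {j. j < K \<and> G (rotate j a)})"
  proof (rule sum.cong[OF refl])
    fix a
    have "(\<Sum>j<K. if G (rotate j a) then 1 else 0) = card {j\<in>{..<K}. G (rotate j a)}"
      by (simp add: sum.inter_filter[symmetric])
    thus "(\<Sum>j<K. if G (rotate j a) then 1 else 0) = card {j. j < K \<and> G (rotate j a)}" by simp
  qed
  also have "\<dots> = t * card V" using cyc by simp
  finally show ?thesis .
qed



definition reg :: "nat \<Rightarrow> nat \<Rightarrow> int \<Rightarrow> int \<Rightarrow> bool" where
  "reg s t x y \<longleftrightarrow> y < int t \<or> int s * (y div int t) < x"

lemma reg_mono: "reg s t x y \<Longrightarrow> x \<le> x' \<Longrightarrow> reg s t x' y"
  unfolding reg_def by auto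

lemma reg_not_stair:
  assumes s: "0 < s" and t: "0 < t" and x: "0 \<le> x" and r: "reg s t x y"
  shows "(x, y) \<notin> staircase_points s t"
proof
  assume "(x, y) \<in> staircase_points s t"
  then obtain k :: nat where k: "(y = int ((k + 1) * t) \<and> int (k * s) \<le> x \<and> x \<le> int ((k + 1) * s))
      \<or> (x = int ((k + 1) * s) \<and> int ((k + 1) * t) \<le> y \<and> y \<le> int ((k + 2) * t))"
    unfolding staircase_points_def by auto
  thus False
  proof
    assume h: "y = int ((k + 1) * t) \<and> int (k * s) \<le> x \<and> x \<le> int ((k + 1) * s)"
    hence "y div int t = int (k+1)" using t by simp
    moreover have "\<not> y < int t" using h t by (simp add: mult_less_0_iff)
    ultimately show False using r h unfolding reg_def by (simp add: algebra_simps)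
  next
    assume h: "x = int ((k + 1) * s) \<and> int ((k + 1) * t) \<le> y \<and> y \<le> int ((k + 2) * t)"
    have "int (k+1) * int t \<le> y" using h by (simp add: algebra_simps)
    hence "(int (k+1) * int t) div int t \<le> y div int t" using t by (intro zdiv_mono1) auto
    hence "int (k+1) \<le> y div int t" using t by simp
    hence "int s * int (k+1) \<le> int s * (y div int t)" by (simp add: mult_left_mono)
    moreover have "int t \<le> int (k+1) * int t" by (simp add: algebra_simps zero_le_mult_iff)
    hence "\<not> y < int t" using \<open>int (k+1) * int t \<le> y\<close> by linarith
    ultimately show False using r h unfolding reg_def by (simp add: algebra_simps)
  qed
qed


lemma north_stair:
  assumes s: "0 < s" and t: "0 < t" and x: "0 \<le> x" and r: "reg s t x (int y)" and nr: "\<not> reg s t x (int y + 1)"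
  shows "(x, int y + 1) \<in> staircase_points s t"
proof -
  define Y where "Y = Suc y"
  have e: "(int y + 1) div int t = int (Y div t)" unfolding Y_def by (simp add: zdiv_int add.commute)
  have nr': "\<not> Y < t" "\<not> int s * int (Y div t) < x"
    using nr unfolding reg_def e by (simp_all add: Y_def)
  have r': "y < t \<or> int s * int (y div t) < x"
    using r unfolding reg_def by (simp add: zdiv_int[symmetric])
  have m0: "Y mod t = 0"
  proof (rule ccontr)
    assume h: "Y mod t \<noteq> 0"
    hence "Y div t = y div t" unfolding Y_def by (simp add: div_Suc)
    moreover have "\<not> y < t"
    proof
      assume "y < t"
      hence "Y = t" using nr' Y_def by simp
      thus False using h by simp
    qed
    ultimately show False using r' nr' by simp
  qed
  define Q where "Q = Y div t"
  have YQ: "Y = Q * t" using m0 unfolding Q_def by (metis div_mult_mod_eq add_0_right)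
  have Q1: "1 \<le> Q" using nr' YQ t by (cases Q) auto
  define k where "k = Q - 1"
  have kQ: "k + 1 = Q" using Q1 k_def by simp
  have "int (k * s) \<le> x"
  proof (cases "y < t")
    case True
    have "Q < 2"
    proof (rule ccontr)
      assume "\<not> Q < 2"
      hence "2*t \<le> Q*t" by (intro mult_le_mono1) simp
      thus False using True YQ Y_def t by linarith
    qed
    hence "Q = 1" using Q1 by simp
    thus ?thesis using x kQ by simp
  next
    case False
    have "y div t = k" using m0 kQ unfolding Q_def Y_def by (simp add: div_Suc)
    thus ?thesis using r' False by (simp add: mult.commute)
  qed
  moreover have "x \<le> int ((k + 1) * s)" using nr' kQ unfolding Q_def by (simp add: mult.commute)
  moreover have "int y + 1 = int ((k+1) * t)"
  proof -
    have "Suc y = (k+1)*t" using YQ kQ Y_def by simp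
    hence "int (Suc y) = int ((k+1)*t)" by (rule arg_cong)
    thus ?thesis by simp
  qed
  ultimately show ?thesis unfolding staircase_points_def by blast
qed



fun blocks :: "nat list \<Rightarrow> bool list" where
  "blocks [] = []"
| "blocks (k # a) = replicate k True @ False # blocks a"

definition pth :: "nat list \<Rightarrow> nat \<Rightarrow> bool list" where
  "pth a k = blocks a @ replicate k True"

lemma pp_ne: "path_points p bs \<noteq> []"
  by (cases p; cases bs) auto

lemma pp_hd: "p \<in> set (path_points p bs)"
  by (cases p; cases bs) auto

lemma pp_rep: "set (path_points (x,y) (replicate k True @ bs))
   = {(x + int i, y) | i. i < k} \<union> set (path_points (x + int k, y) bs)"
proof (induction k arbitrary: x)
  case 0 thus ?case by simp
next
  case (Suc k)
  have "set (path_points (x,y) (replicate (Suc k) True @ bs))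
      = insert (x,y) (set (path_points (x+1,y) (replicate k True @ bs)))" by simp
  also have "\<dots> = insert (x,y) ({(x + 1 + int i, y) | i. i < k} \<union> set (path_points (x + 1 + int k, y) bs))"
    using Suc by simp
  also have "\<dots> = {(x + int i, y) | i. i < Suc k} \<union> set (path_points (x + int (Suc k), y) bs)"
  proof -
    have "insert (x,y) {(x + 1 + int i, y) | i. i < k} = {(x + int i, y) | i. i < Suc k}"
    proof (intro equalityI subsetI)
      fix p assume "p \<in> {(x + int i, y) | i. i < Suc k}"
      then obtain i where i: "p = (x + int i, y)" "i < Suc k" by auto
      show "p \<in> insert (x,y) {(x + 1 + int i, y) | i. i < k}"
      proof (cases i)
        case 0 thus ?thesis using i by simp
      next
        case (Suc i') thus ?thesis using i by (auto simp: algebra_simps)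
      qed
    next
      fix p assume "p \<in> insert (x,y) {(x + 1 + int i, y) | i. i < k}"
      thus "p \<in> {(x + int i, y) | i. i < Suc k}"
      proof
        assume "p = (x,y)" thus ?thesis by (intro CollectI exI[of _ 0]) simp
      next
        assume "p \<in> {(x + 1 + int i, y) | i. i < k}"
        then obtain i where i: "p = (x + 1 + int i, y)" "i < k" by auto
        show ?thesis using i by (intro CollectI exI[of _ "Suc i"]) (simp add: algebra_simps)
      qed
    qed
    moreover have "x + int (Suc k) = x + 1 + int k" by simp
    ultimately show ?thesis by (simp only: Un_insert_left[symmetric])
  qed
  finally show ?case .
qed

lemma last_pp: "last (path_points (x,y) bs) = (x + int (length (filter id bs)), y + int (length (filter Not bs)))"
proof (induction bs arbitrary: x y)
  case Nil thus ?case by simp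
next
  case (Cons b bs)
  show ?case using Cons pp_ne by (cases b) (auto simp: algebra_simps)
qed

lemma avoid_iff:
  assumes s: "0 < s" and t: "0 < t"
  shows "0 \<le> x \<Longrightarrow> 0 \<le> y \<Longrightarrow> reg s t x y \<Longrightarrow>
    (set (path_points (x,y) bs) \<inter> staircase_points s t = {}) \<longleftrightarrow> (\<forall>(a,b)\<in>set (path_points (x,y) bs). reg s t a b)"
proof (induction bs arbitrary: x y)
  case Nil thus ?case using reg_not_stair[OF s t] by auto
next
  case (Cons b bs)
  have hd: "(x,y) \<notin> staircase_points s t" using reg_not_stair[OF s t] Cons.prems by auto
  show ?case
  proof (cases b)
    case True
    have "reg s t (x+1) y" using Cons.prems reg_mono by fastforce
    hence "(set (path_points (x+1,y) bs) \<inter> staircase_points s t = {}) \<longleftrightarrow> (\<forall>(a,b)\<in>set (path_points (x+1,y) bs). reg s t a b)"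
      using Cons by auto
    thus ?thesis using True hd Cons.prems by auto
  next
    case False
    show ?thesis
    proof (cases "reg s t x (y+1)")
      case True
      hence "(set (path_points (x,y+1) bs) \<inter> staircase_points s t = {}) \<longleftrightarrow> (\<forall>(a,b)\<in>set (path_points (x,y+1) bs). reg s t a b)"
        using Cons by auto
      thus ?thesis using False hd Cons.prems by auto
    next
      case nr: False
      obtain y' where y': "y = int y'" using Cons.prems(2) by (metis nonneg_int_cases)
      have "(x, y+1) \<in> staircase_points s t" using north_stair[OF s t, of x y'] Cons.prems nr y' by auto
      moreover have "(x, y+1) \<in> set (path_points (x,y+1) bs)" by (rule pp_hd)
      ultimately show ?thesis using False nr by auto
    qed
  qed
qed

lemma ball_Suc_shift: "(\<forall>j\<in>{1..Suc L}. P j) \<longleftrightarrow> P 1 \<and> (\<forall>j\<in>{1..L}. P (Suc j))"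
proof
  assume "\<forall>j\<in>{1..Suc L}. P j" thus "P 1 \<and> (\<forall>j\<in>{1..L}. P (Suc j))" by auto
next
  assume H: "P 1 \<and> (\<forall>j\<in>{1..L}. P (Suc j))"
  show "\<forall>j\<in>{1..Suc L}. P j"
  proof
    fix j assume j: "j \<in> {1..Suc L}"
    then obtain j' where j': "j = Suc j'" by (cases j) auto
    show "P j"
    proof (cases j')
      case 0 thus ?thesis using H j' by simp
    next
      case (Suc j'') thus ?thesis using H j j' by auto
    qed
  qed
qed

lemma allreg_pth:
  "reg s t x y \<Longrightarrow> (\<forall>(a,b)\<in>set (path_points (x,y) (pth a k)). reg s t a b)
     \<longleftrightarrow> (\<forall>j\<in>{1..length a}. reg s t (x + int (sum_list (take j a))) (y + int j))"
proof (induction a arbitrary: x y)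
  case Nil
  have "set (path_points (x,y) (pth [] k)) = {(x + int i, y) | i. i < k} \<union> {(x + int k, y)}"
    using pp_rep[of x y k "[]"] by (simp add: pth_def)
  thus ?case using Nil reg_mono by fastforce
next
  case (Cons c a)
  have S: "set (path_points (x,y) (pth (c#a) k)) = {(x + int i, y) | i. i < c} \<union>
      (insert (x + int c, y) (set (path_points (x + int c, y+1) (pth a k))))"
    using pp_rep[of x y c "False # pth a k"] by (simp add: pth_def)
  have L: "(\<forall>(a,b)\<in>set (path_points (x,y) (pth (c#a) k)). reg s t a b) \<longleftrightarrow>
      (\<forall>(a,b)\<in>set (path_points (x + int c, y+1) (pth a k)). reg s t a b)"
  proof -
    have A: "\<forall>(a,b)\<in>{(x + int i, y) | i. i < c}. reg s t a b"
      using Cons.prems reg_mono by (auto simp del: of_nat_add)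
    have q: "reg s t (x + int c) y" using Cons.prems reg_mono by simp
    show ?thesis unfolding S ball_Un using A q by simp
  qed
  have R: "(\<forall>j\<in>{1..length (c#a)}. reg s t (x + int (sum_list (take j (c#a)))) (y + int j)) \<longleftrightarrow>
      reg s t (x + int c) (y+1) \<and> (\<forall>j\<in>{1..length a}. reg s t (x + int c + int (sum_list (take j a))) (y + 1 + int j))"
  proof -
    have "(\<forall>j\<in>{1..Suc (length a)}. P j) \<longleftrightarrow> P 1 \<and> (\<forall>j\<in>{1..length a}. P (Suc j))" for P
      by (rule ball_Suc_shift)
    from this[of "\<lambda>j. reg s t (x + int (sum_list (take j (c#a)))) (y + int j)"]
    show ?thesis by (simp add: add.assoc add.commute add.left_commute)
  qed
  show ?case
  proof (cases "reg s t (x + int c) (y+1)")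
    case True
    note IH = Cons.IH[OF True]
    from L R IH True show ?thesis by argo
  next
    case False
    have "(x + int c, y+1) \<in> set (path_points (x + int c, y+1) (pth a k))" by (rule pp_hd)
    hence "\<not> (\<forall>(a,b)\<in>set (path_points (x + int c, y+1) (pth a k)). reg s t a b)" using False by auto
    with L R False show ?thesis by argo
  qed
qed



fun dec :: "bool list \<Rightarrow> nat list \<times> nat" where
  "dec [] = ([], 0)"
| "dec (b # bs) = (case dec bs of (a, k) \<Rightarrow>
     if b then (case a of [] \<Rightarrow> ([], Suc k) | x # xs \<Rightarrow> (Suc x # xs, k)) else (0 # a, k))"

lemma pth_dec: "pth (fst (dec bs)) (snd (dec bs)) = bs"
proof (induction bs)
  case Nil thus ?case by (simp add: pth_def)
next
  case (Cons b bs)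
  obtain a k where ak: "dec bs = (a, k)" by (cases "dec bs")
  show ?case
  proof (cases b)
    case True
    show ?thesis
    proof (cases a)
      case Nil thus ?thesis using Cons ak True by (simp add: pth_def)
    next
      case (Cons x xs) thus ?thesis using Cons.IH ak True by (simp add: pth_def)
    qed
  next
    case False thus ?thesis using Cons ak by (simp add: pth_def)
  qed
qed

lemma dec_rep: "dec (replicate k True) = ([], k)"
  by (induction k) auto

lemma dec_rep_F: "dec (replicate c True @ False # rest) = (c # fst (dec rest), snd (dec rest))"
  by (induction c) (auto split: prod.splits)

lemma dec_pth: "dec (pth a k) = (a, k)"
proof (induction a)
  case Nil thus ?case by (simp add: pth_def dec_rep)
next
  case (Cons c a)
  have "pth (c # a) k = replicate c True @ False # pth a k" by (simp add: pth_def)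
  thus ?case using Cons dec_rep_F[of c "pth a k"] by simp
qed

lemma cnt_blocks: "length (filter id (blocks a)) = sum_list a" "length (filter Not (blocks a)) = length a"
  by (induction a) auto

lemma last_pth: "last (path_points (x,y) (pth a k)) = (x + int (sum_list a + k), y + int (length a))"
  using last_pp[of x y "pth a k"] by (simp add: pth_def cnt_blocks)

lemma sum_take_mono: "i \<le> j \<Longrightarrow> sum_list (take i (a::nat list)) \<le> sum_list (take j a)"
proof -
  assume "i \<le> j"
  hence "take j a = take i a @ take (j - i) (drop i a)" by (metis le_add_diff_inverse take_add)
  thus ?thesis by simp
qed

lemma reg_nat: "reg s t (int X) (int j) \<longleftrightarrow> (j < t \<or> s * (j div t) < X)"
  unfolding reg_def by (simp add: zdiv_int[symmetric] of_nat_mult[symmetric] del: of_nat_mult)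

lemma reg_nat1: "reg s t (1 + int X) (int j) \<longleftrightarrow> (j < t \<or> s * (j div t) < 1 + X)"
  using reg_nat[of s t "1 + X" j] by simp

lemma cond1:
  assumes t: "0 < t" and len: "length a = t*n"
  shows "(\<forall>j\<in>{1..t*n}. j < t \<or> s * (j div t) < sum_list (take j a)) \<longleftrightarrow> good1 s t n a"
  unfolding good1_def
proof
  assume H: "\<forall>j\<in>{1..t*n}. j < t \<or> s * (j div t) < sum_list (take j a)"
  show "\<forall>m\<in>{1..n}. s * m < sum_list (take (m * t) a)"
  proof
    fix m assume m: "m \<in> {1..n}"
    have "m * t \<in> {1..t*n}" using m t by (auto simp: mult.commute)
    moreover have "\<not> m*t < t" using m t by simp
    ultimately show "s * m < sum_list (take (m * t) a)" using H t by fastforce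
  qed
next
  assume H: "\<forall>m\<in>{1..n}. s * m < sum_list (take (m * t) a)"
  show "\<forall>j\<in>{1..t*n}. j < t \<or> s * (j div t) < sum_list (take j a)"
  proof
    fix j assume j: "j \<in> {1..t*n}"
    show "j < t \<or> s * (j div t) < sum_list (take j a)"
    proof (cases "j < t")
      case False
      define m where "m = j div t"
      have "0 < m" using False t unfolding m_def by (simp add: div_greater_zero_iff)
      moreover have "m \<le> n" using j t unfolding m_def by (metis atLeastAtMost_iff div_le_mono nonzero_mult_div_cancel_left not_gr0 not_less0)
      ultimately have "s * m < sum_list (take (m * t) a)" using H by auto
      moreover have "m * t \<le> j" unfolding m_def by (rule div_times_less_eq_dividend)
      ultimately show ?thesis using sum_take_mono[of "m*t" j a] unfolding m_def by simp
    qed simp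
  qed
qed


lemma cond2:
  assumes t: "0 < t" and len: "length a = t*n - 1"
  shows "(\<forall>j\<in>{1..t*n-1}. j < t \<or> s * (j div t) < 1 + sum_list (take j a)) \<longleftrightarrow>
         (\<forall>m\<in>{1..<n}. s * m \<le> sum_list (take (m * t) a))"
proof
  assume H: "\<forall>j\<in>{1..t*n-1}. j < t \<or> s * (j div t) < 1 + sum_list (take j a)"
  show "\<forall>m\<in>{1..<n}. s * m \<le> sum_list (take (m * t) a)"
  proof
    fix m assume m: "m \<in> {1..<n}"
    have "m * t \<le> (n - 1) * t" using m by (intro mult_le_mono1) auto
    also have "\<dots> = t * n - t" by (simp add: algebra_simps)
    finally have "m * t \<in> {1..t*n-1}" using m t by auto
    moreover have "\<not> m*t < t" using m t by simp
    ultimately show "s * m \<le> sum_list (take (m * t) a)" using H t by fastforce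
  qed
next
  assume H: "\<forall>m\<in>{1..<n}. s * m \<le> sum_list (take (m * t) a)"
  show "\<forall>j\<in>{1..t*n-1}. j < t \<or> s * (j div t) < 1 + sum_list (take j a)"
  proof
    fix j assume j: "j \<in> {1..t*n-1}"
    show "j < t \<or> s * (j div t) < 1 + sum_list (take j a)"
    proof (cases "j < t")
      case False
      define m where "m = j div t"
      have "0 < m" using False t unfolding m_def by (simp add: div_greater_zero_iff)
      moreover have "m < n"
      proof -
        have "j < n * t" using j by (auto simp: mult.commute)
        thus ?thesis unfolding m_def by (rule less_mult_imp_div_less)
      qed
      ultimately have "s * m \<le> sum_list (take (m * t) a)" using H by auto
      moreover have "m * t \<le> j" unfolding m_def by (rule div_times_less_eq_dividend)
      ultimately show ?thesis using sum_take_mono[of "m*t" j a] unfolding m_def by simp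
    qed simp
  qed
qed


lemma avoids_pth0:
  assumes s: "0 < s" and t: "0 < t"
  shows "avoids (0,0) (pth a k) s t \<longleftrightarrow> (\<forall>j\<in>{1..length a}. j < t \<or> s*(j div t) < sum_list (take j a))"
proof -
  have r: "reg s t 0 0" using t by (simp add: reg_def)
  have "avoids (0,0) (pth a k) s t \<longleftrightarrow> (\<forall>(a,b)\<in>set (path_points (0,0) (pth a k)). reg s t a b)"
    unfolding avoids_def by (rule avoid_iff[OF s t]) (use r in auto)
  also have "\<dots> \<longleftrightarrow> (\<forall>j\<in>{1..length a}. reg s t (0 + int (sum_list (take j a))) (0 + int j))"
    by (rule allreg_pth[OF r])
  also have "\<dots> \<longleftrightarrow> (\<forall>j\<in>{1..length a}. j < t \<or> s*(j div t) < sum_list (take j a))"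
    using reg_nat[of s t] by simp
  finally show ?thesis .
qed

lemma avoids_pth1:
  assumes s: "0 < s" and t: "0 < t"
  shows "avoids (1,0) (pth a k) s t \<longleftrightarrow> (\<forall>j\<in>{1..length a}. j < t \<or> s*(j div t) < 1 + sum_list (take j a))"
proof -
  have r: "reg s t 1 0" using t by (simp add: reg_def)
  have "avoids (1,0) (pth a k) s t \<longleftrightarrow> (\<forall>(a,b)\<in>set (path_points (1,0) (pth a k)). reg s t a b)"
    unfolding avoids_def by (rule avoid_iff[OF s t]) (use r in auto)
  also have "\<dots> \<longleftrightarrow> (\<forall>j\<in>{1..length a}. reg s t (1 + int (sum_list (take j a))) (0 + int j))"
    by (rule allreg_pth[OF r])
  also have "\<dots> \<longleftrightarrow> (\<forall>j\<in>{1..length a}. j < t \<or> s*(j div t) < 1 + sum_list (take j a))"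
    using reg_nat1[of s t] by simp
  finally show ?thesis .
qed

lemma inj_pth: "pth a k = pth a' k' \<Longrightarrow> a = a' \<and> k = k'"
proof -
  assume e: "pth a k = pth a' k'"
  have "dec (pth a k) = dec (pth a' k')" using e by (rule arg_cong)
  thus ?thesis by (simp only: dec_pth prod.inject)
qed

lemma part1:
  assumes s: "0 < s" and t: "0 < t" and n: "0 < n"
  shows "n * card {bs \<in> lattice_paths (0, 0) (int (s * n + 1), int (t * n)). avoids (0, 0) bs s t}
         = (s*n + t*n) choose (s*n+1)"
proof -
  define V where "V = {a::nat list. length a = t*n \<and> sum_list a = s*n+1}"
  let ?A = "{bs \<in> lattice_paths (0, 0) (int (s * n + 1), int (t * n)). avoids (0, 0) bs s t}"
  have key: "pth a k \<in> ?A \<longleftrightarrow> length a = t*n \<and> sum_list a + k = s*n+1 \<and>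
      (\<forall>j\<in>{1..length a}. j < t \<or> s*(j div t) < sum_list (take j a))" for a k
  proof -
    have "pth a k \<in> lattice_paths (0, 0) (int (s * n + 1), int (t * n)) \<longleftrightarrow>
          length a = t*n \<and> sum_list a + k = s*n+1"
    proof -
      have "last (path_points (0,0) (pth a k)) = (int (sum_list a + k), int (length a))"
        using last_pth[of 0 0 a k] by simp
      thus ?thesis unfolding lattice_paths_def by (auto simp only: mem_Collect_eq prod.inject of_nat_eq_iff)
    qed
    thus ?thesis using avoids_pth0[OF s t] by auto
  qed
  have seteq: "?A = blocks ` {a\<in>V. good1 s t n a}"
  proof (intro equalityI subsetI)
    fix bs assume bs: "bs \<in> ?A"
    define a where "a = fst (dec bs)"
    define k where "k = snd (dec bs)"
    have bsak: "bs = pth a k" unfolding a_def k_def by (simp add: pth_dec)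
    have h: "length a = t*n" "sum_list a + k = s*n+1"
      "\<forall>j\<in>{1..length a}. j < t \<or> s*(j div t) < sum_list (take j a)"
      using key[of a k] bs bsak by auto
    have g: "good1 s t n a" using cond1[OF t h(1)] h by simp
    hence "s*n < sum_list (take (n*t) a)" using n unfolding good1_def by auto
    hence "s*n < sum_list a" using h(1) by (simp add: mult.commute)
    hence "k = 0" using h(2) by simp
    hence "bs = blocks a" using bsak by (simp add: pth_def)
    moreover have "a \<in> V" using h \<open>k = 0\<close> unfolding V_def by simp
    ultimately show "bs \<in> blocks ` {a\<in>V. good1 s t n a}" using g by auto
  next
    fix bs assume "bs \<in> blocks ` {a\<in>V. good1 s t n a}"
    then obtain a where a: "a \<in> V" "good1 s t n a" "bs = blocks a" by auto
    have "bs = pth a 0" using a by (simp add: pth_def)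
    moreover have "length a = t*n" "sum_list a + 0 = s*n+1" using a unfolding V_def by auto
    moreover have "\<forall>j\<in>{1..length a}. j < t \<or> s*(j div t) < sum_list (take j a)"
      using cond1[OF t \<open>length a = t*n\<close>] a \<open>length a = t*n\<close> by simp
    ultimately show "bs \<in> ?A" using key by simp
  qed
  have inj: "inj_on blocks {a\<in>V. good1 s t n a}"
    by (rule inj_onI) (metis inj_pth pth_def append_Nil2 replicate_0)
  have cA: "card ?A = card {a\<in>V. good1 s t n a}" unfolding seteq by (rule card_image[OF inj])
  have "t*n * card {a\<in>V. good1 s t n a} = t * card V"
    unfolding V_def
    by (rule double_count) (use t n in \<open>auto intro: cyc_good1\<close>)
  hence "n * card {a\<in>V. good1 s t n a} = card V" using t by (simp add: mult.assoc)
  also have "card V = (s*n + 1 + t*n - 1) choose (s*n+1)" unfolding V_def by (rule card_length_sum_list)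
  finally show ?thesis using cA by simp
qed

lemma part2:
  assumes s: "0 < s" and t: "0 < t" and n: "0 < n"
  shows "n * card {bs \<in> lattice_paths (1, 0) (int (s * n), int (t * n) - 1). avoids (1, 0) bs s t}
         = (s*n - 1 + t*n - 1) choose (s*n - 1)"
proof -
  define V where "V = {a::nat list. length a = t*n \<and> sum_list a = s*n-1}"
  let ?A = "{bs \<in> lattice_paths (1, 0) (int (s * n), int (t * n) - 1). avoids (1, 0) bs s t}"
  let ?f = "\<lambda>b. pth (butlast b) (last b)"
  have tn: "1 \<le> t*n" "1 \<le> s*n" using t n s by auto
  have key: "pth a k \<in> ?A \<longleftrightarrow> length a = t*n - 1 \<and> sum_list a + k = s*n - 1 \<and>
      (\<forall>j\<in>{1..length a}. j < t \<or> s*(j div t) < 1 + sum_list (take j a))" for a k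
  proof -
    have "pth a k \<in> lattice_paths (1, 0) (int (s * n), int (t * n) - 1) \<longleftrightarrow>
          length a = t*n - 1 \<and> sum_list a + k = s*n - 1"
    proof -
      have "last (path_points (1,0) (pth a k)) = (1 + int (sum_list a + k), int (length a))"
        using last_pth[of 1 0 a k] by simp
      moreover have "(int (s * n), int (t * n) - 1) = (1 + int (s*n - 1), int (t*n - 1))"
        using tn by (simp add: of_nat_diff)
      ultimately show ?thesis unfolding lattice_paths_def
        by (auto simp only: mem_Collect_eq prod.inject of_nat_eq_iff add_left_cancel)
    qed
    thus ?thesis using avoids_pth1[OF s t] by auto
  qed
  have gd: "good2 s t n (a @ [k]) \<longleftrightarrow> (\<forall>m\<in>{1..<n}. s * m \<le> sum_list (take (m * t) a))"
    if "length a = t*n - 1" for a k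
  proof -
    have "take (m*t) (a @ [k]) = take (m*t) a" if "m \<in> {1..<n}" for m
    proof -
      have "m * t \<le> (n - 1) * t" using that by (intro mult_le_mono1) auto
      also have "\<dots> = t * n - t" by (simp add: algebra_simps)
      finally show ?thesis using \<open>length a = t*n - 1\<close> t by simp
    qed
    thus ?thesis unfolding good2_def by auto
  qed
  have seteq: "?A = ?f ` {a\<in>V. good2 s t n a}"
  proof (intro equalityI subsetI)
    fix bs assume bs: "bs \<in> ?A"
    define a where "a = fst (dec bs)"
    define k where "k = snd (dec bs)"
    have bsak: "bs = pth a k" unfolding a_def k_def by (simp add: pth_dec)
    have h: "length a = t*n - 1" "sum_list a + k = s*n - 1"
      "\<forall>j\<in>{1..length a}. j < t \<or> s*(j div t) < 1 + sum_list (take j a)"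
      using key[of a k] bs bsak by auto
    have g: "good2 s t n (a @ [k])" using cond2[OF t h(1)] h gd[OF h(1)] by simp
    moreover have "a @ [k] \<in> V" using h tn unfolding V_def by simp
    moreover have "bs = ?f (a @ [k])" using bsak by simp
    ultimately show "bs \<in> ?f ` {a\<in>V. good2 s t n a}" by blast
  next
    fix bs assume "bs \<in> ?f ` {a\<in>V. good2 s t n a}"
    then obtain b where b: "b \<in> V" "good2 s t n b" "bs = ?f b" by auto
    have bne: "b \<noteq> []" using b tn unfolding V_def by auto
    define a where "a = butlast b"
    define k where "k = last b"
    have bak: "b = a @ [k]" using bne unfolding a_def k_def by simp
    have la: "length a = t*n - 1" using b unfolding V_def a_def by simp
    moreover have "sum_list a + k = s*n - 1" using b bak unfolding V_def by simp
    moreover have "\<forall>j\<in>{1..length a}. j < t \<or> s*(j div t) < 1 + sum_list (take j a)"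
    proof -
      have "good2 s t n (a @ [k])" using b bak by simp
      hence "\<forall>m\<in>{1..<n}. s * m \<le> sum_list (take (m * t) a)" using gd[OF la, of k] by simp
      hence "\<forall>j\<in>{1..t*n-1}. j < t \<or> s * (j div t) < 1 + sum_list (take j a)" using cond2[OF t la] by blast
      thus ?thesis using la by simp
    qed
    moreover have "bs = pth a k" using b unfolding a_def k_def by simp
    ultimately show "bs \<in> ?A" using key[of a k] by blast
  qed
  have inj: "inj_on ?f {a\<in>V. good2 s t n a}"
  proof (rule inj_onI)
    fix x y assume x: "x \<in> {a\<in>V. good2 s t n a}" and y: "y \<in> {a\<in>V. good2 s t n a}" and e: "?f x = ?f y"
    have "x \<noteq> []" "y \<noteq> []" using x y tn unfolding V_def by auto
    moreover have "butlast x = butlast y" "last x = last y" using inj_pth[OF e] by auto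
    ultimately show "x = y" by (metis append_butlast_last_id)
  qed
  have cA: "card ?A = card {a\<in>V. good2 s t n a}" unfolding seteq by (rule card_image[OF inj])
  have "t*n * card {a\<in>V. good2 s t n a} = t * card V"
    unfolding V_def
    by (rule double_count) (use t n s in \<open>auto intro: cyc_good2\<close>)
  hence "n * card {a\<in>V. good2 s t n a} = card V" using t by (simp add: mult.assoc)
  also have "card V = (s*n - 1 + t*n - 1) choose (s*n-1)" unfolding V_def by (rule card_length_sum_list)
  finally show ?thesis using cA by simp
qed


lemma arith1:
  fixes n c S T :: nat
  assumes n: "0 < n" and T: "1 \<le> T" and c: "n * c = (S + T) choose (S + 1)"
    and ST: "S = s * n" "T = t * n"
  shows "int c = int t * zbinom (S + T) (int T) - int s * zbinom (S + T) (int T - 1)"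
proof -
  obtain T' where T': "T = Suc T'" using T by (cases T) auto
  have z1: "zbinom (S + T) (int T) = int ((S+T) choose T)" unfolding zbinom_def by simp
  have z2: "zbinom (S + T) (int T - 1) = int ((S+T) choose T')" unfolding zbinom_def using T' by simp
  have sym: "(S + T) choose (S + 1) = (S + T) choose T'"
    using binomial_symmetric[of "S+1" "S+T"] T' by simp
  have id: "T * ((S+T) choose T) = (S + 1) * ((S+T) choose T')"
    using Suc_times_binomial_add[of T' S] T' by (simp add: add.commute)
  have "int n * int c = int ((S+T) choose T')" using c sym by (metis of_nat_mult)
  moreover have "int n * (int t * int ((S+T) choose T) - int s * int ((S+T) choose T')) = int ((S+T) choose T')"
  proof -
    have "int n * (int t * int ((S+T) choose T) - int s * int ((S+T) choose T'))
        = int T * int ((S+T) choose T) - int S * int ((S+T) choose T')"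
      using ST by (simp add: algebra_simps)
    also have "\<dots> = (int S + 1) * int ((S+T) choose T') - int S * int ((S+T) choose T')"
      using arg_cong[OF id, of int] by (simp add: algebra_simps)
    finally show ?thesis by (simp add: algebra_simps)
  qed
  ultimately have "int n * int c = int n * (int t * int ((S+T) choose T) - int s * int ((S+T) choose T'))" by simp
  hence "int c = int t * int ((S+T) choose T) - int s * int ((S+T) choose T')" using n by simp
  thus ?thesis using z1 z2 by simp
qed

lemma arith2:
  fixes n c S T :: nat
  assumes n: "0 < n" and T: "1 \<le> T" and S: "1 \<le> S" and c: "n * c = (S - 1 + T - 1) choose (S - 1)"
    and ST: "S = s * n" "T = t * n"
  shows "int c = int t * zbinom (S + T - 2) (int T - 1) - int s * zbinom (S + T - 2) (int T - 2)"
proof -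
  obtain T' where T': "T = Suc T'" using T by (cases T) auto
  obtain S' where S': "S = Suc S'" using S by (cases S) auto
  define M where "M = S' + T'"
  have M: "S + T - 2 = M" "S - 1 + T - 1 = M" using S' T' M_def by auto
  have z1: "zbinom M (int T - 1) = int (M choose T')" unfolding zbinom_def using T' by simp
  have sym: "M choose S' = M choose T'"
    using binomial_symmetric[of S' M] M_def by simp
  have nc: "int n * int c = int (M choose T')" using c sym M S' by (metis diff_Suc_1 of_nat_mult)
  show ?thesis
  proof (cases T')
    case 0
    hence "t * n = 1" using ST T' by simp
    hence tn: "t = 1" "n = 1" by simp_all
    have "zbinom M (int T - 2) = 0" unfolding zbinom_def using T' 0 by simp
    thus ?thesis using nc tn M z1 0 by simp
  next
    case (Suc T'')
    have z2: "zbinom M (int T - 2) = int (M choose T'')" unfolding zbinom_def using T' Suc by simp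
    have id: "T' * (M choose T') = S * (M choose T'')"
      using Suc_times_binomial_add[of T'' S'] Suc S' M_def by (simp add: add.commute)
    have "int n * (int t * int (M choose T') - int s * int (M choose T'')) = int (M choose T')"
    proof -
      have "int n * (int t * int (M choose T') - int s * int (M choose T''))
          = int T * int (M choose T') - int S * int (M choose T'')"
        using ST by (simp add: algebra_simps)
      also have "\<dots> = int T * int (M choose T') - int T' * int (M choose T')"
        using arg_cong[OF id, of int] by (simp add: algebra_simps)
      finally show ?thesis using T' by (simp add: algebra_simps)
    qed
    hence "int n * int c = int n * (int t * int (M choose T') - int s * int (M choose T''))" using nc by simp
    hence "int c = int t * int (M choose T') - int s * int (M choose T'')" using n by simp
    thus ?thesis using z1 z2 M by simp
  qed
qed

theorem corollary1p2:
  fixes s t n :: nat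
  assumes "0 < s" and "0 < t" and "0 < n"
  shows "int (card {bs \<in> lattice_paths (0, 0) (int (s * n + 1), int (t * n)). avoids (0, 0) bs s t})
           = int t * zbinom (s * n + t * n) (int (t * n)) - int s * zbinom (s * n + t * n) (int (t * n) - 1)
       \<and> int (card {bs \<in> lattice_paths (1, 0) (int (s * n), int (t * n) - 1). avoids (1, 0) bs s t})
           = int t * zbinom (s * n + t * n - 2) (int (t * n) - 1) - int s * zbinom (s * n + t * n - 2) (int (t * n) - 2)"
proof
  have T: "1 \<le> t * n" "1 \<le> s * n" using assms by auto
  show "int (card {bs \<in> lattice_paths (0, 0) (int (s * n + 1), int (t * n)). avoids (0, 0) bs s t})
           = int t * zbinom (s * n + t * n) (int (t * n)) - int s * zbinom (s * n + t * n) (int (t * n) - 1)"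
    by (rule arith1[OF assms(3) T(1) part1[OF assms]]) auto
  show "int (card {bs \<in> lattice_paths (1, 0) (int (s * n), int (t * n) - 1). avoids (1, 0) bs s t})
           = int t * zbinom (s * n + t * n - 2) (int (t * n) - 1) - int s * zbinom (s * n + t * n - 2) (int (t * n) - 2)"
    by (rule arith2[OF assms(3) T(1) T(2) part2[OF assms]]) auto
qed


end
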